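(* For any real numbers $a>0$ and $\lambda$ with $0<\lambda<\frac{4a^2}{\pi^2}$, there exist real-valued potentials $V$ such that \[ \limsup_{x\to \infty}|xV(x)|=a \] and the associated Schrödinger operator $H=-D^2+V$ has $\lambda$ as an eigenvalue.
   Context: $D$ denotes differentiation $d/dx$. $H=-D^2+V$ acts on $L^2(0,\infty)$ (with a self-adjoint boundary condition at $0$) or on $L^2(\mathbb{R})$. A number $\lambda$ is an eigenvalue of $H$ if there is a nonzero $u\in L^2$ in the domain of $H$ solving $-u''+Vu=\lambda u$. *)

theory Defs
  imports "HOL-Analysis.Analysis"
begin

text \<open>Eigenvalue of the half-line Schroedinger operator H = -D^2 + V on L^2(0,infinity)
  with the self-adjoint (separated) boundary condition at 0 given by the angle theta:
  cos theta * u(0) - sin theta * u'(0) = 0.  The potential V is real and continuous on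
  [0,infinity), so every solution of -u'' + V u = E u is C^2 on [0,infinity); such a u lies
  in the domain of H iff it is square integrable and satisfies the boundary condition.\<close>

definition half_line_eigenvalue :: "(real \<Rightarrow> real) \<Rightarrow> real \<Rightarrow> real \<Rightarrow> bool" where
  "half_line_eigenvalue V theta E \<longleftrightarrow>
     (\<exists>u u' u''.
        (\<forall>x\<ge>0. (u has_real_derivative u' x) (at x within {0..})) \<and>
        (\<forall>x\<ge>0. (u' has_real_derivative u'' x) (at x within {0..})) \<and>
        (\<forall>x\<ge>0. - u'' x + V x * u x = E * u x) \<and>
        (\<lambda>x. (u x)\<^sup>2) integrable_on {0..} \<and>
        cos theta * u 0 - sin theta * u' 0 = 0 \<and>
        (\<exists>x>0. u x \<noteq> 0))"

end

theory Submission
  imports Defs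
begin


definition psi :: "real \<Rightarrow> real \<Rightarrow> real" where
  "psi e w = max 0 (w - e) / (max e w)^2"
definition gq :: "real \<Rightarrow> real \<Rightarrow> real" where
  "gq e x = (1 - x) * psi e (sqrt (1 - x^2))"
definition QQ :: "real \<Rightarrow> real \<Rightarrow> real" where
  "QQ e c = (integral {-2..1} (gq e) - integral {-2..c} (gq e)) / 4"
definition hh :: "real \<Rightarrow> real \<Rightarrow> real" where
  "hh e t = QQ e (cos (2*t)) / (sin t)^2"
definition hcot :: "real \<Rightarrow> real \<Rightarrow> real" where
  "hcot e t = hh e t * cos t / sin t"
definition ss :: "real \<Rightarrow> real \<Rightarrow> real" where
  "ss e t = sin (2*t) * psi e \<bar>sin (2*t)\<bar>"
definition pp :: "real \<Rightarrow> real \<Rightarrow> real" where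
  "pp e t = max 0 (\<bar>sin (2*t)\<bar> - e)"

lemma psi_cont: "e > 0 \<Longrightarrow> continuous_on UNIV (psi e)"
  unfolding psi_def by (intro continuous_intros) (auto simp: max_def)

lemma psi_nonneg: "e > 0 \<Longrightarrow> psi e w \<ge> 0"
  unfolding psi_def by auto

lemma psi_le: assumes "e > 0" shows "psi e w \<le> 1 / e"
proof (cases "w \<le> e")
  case True then show ?thesis using assms by (simp add: psi_def)
next
  case False
  then have "psi e w = (w - e) / w^2" by (simp add: psi_def)
  also have "\<dots> \<le> w / w^2" using False assms by (intro divide_right_mono) auto
  also have "\<dots> = 1 / w" by (simp add: power2_eq_square)
  also have "\<dots> \<le> 1 / e" using False assms by (intro divide_left_mono) auto
  finally show ?thesis .
qed

lemma psi_zero: "w \<le> e \<Longrightarrow> psi e w = 0"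
  by (simp add: psi_def)

lemma gq_cont: "e > 0 \<Longrightarrow> continuous_on UNIV (gq e)"
  unfolding gq_def
  by (intro continuous_intros continuous_on_compose2[OF psi_cont]) auto

lemma gq_nonneg: "e > 0 \<Longrightarrow> x \<le> 1 \<Longrightarrow> gq e x \<ge> 0"
  unfolding gq_def using psi_nonneg by auto

lemma gq_le: "e > 0 \<Longrightarrow> -1 \<le> x \<Longrightarrow> x \<le> 1 \<Longrightarrow> gq e x \<le> 2 / e"
proof -
  assume a: "e > 0" "-1 \<le> x" "x \<le> 1"
  have "gq e x \<le> 2 * (1/e)" unfolding gq_def
    using a psi_le[OF a(1)] psi_nonneg[OF a(1)] by (intro mult_mono) auto
  then show ?thesis by simp
qed

lemma gq_zero: "e > 0 \<Longrightarrow> e < 1 \<Longrightarrow> sqrt (1 - e^2) \<le> x \<Longrightarrow> gq e x = 0"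
proof -
  assume a: "e > 0" "e < 1" "sqrt (1 - e^2) \<le> x"
  have x0: "x \<ge> 0" using a(3) real_sqrt_ge_zero[of "1 - e^2"] a by (smt (verit) power_le_one)
  have "1 - e^2 \<le> x^2" using a(3) 
    by (metis abs_of_nonneg real_sqrt_abs real_sqrt_le_iff x0)
  then have "1 - x^2 \<le> e^2" by simp
  then have "sqrt (1 - x^2) \<le> e" using a(1) real_sqrt_le_iff[of "1 - x^2" "e^2"] by simp
  then show ?thesis unfolding gq_def by (simp add: psi_zero)
qed

lemma gq_int: "e > 0 \<Longrightarrow> gq e integrable_on {a..b}"
  by (intro integrable_continuous_interval continuous_on_subset[OF gq_cont]) auto

lemma QQ_eq: assumes "e > 0" "-2 \<le> c" "c \<le> 1"
  shows "QQ e c = integral {c..1} (gq e) / 4"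
proof -
  have "integral {-2..c} (gq e) + integral {c..1} (gq e) = integral {-2..1} (gq e)"
    using Henstock_Kurzweil_Integration.integral_combine[where a="-2" and c=c and b=1 and f="gq e"] gq_int[OF assms(1), where a="-2" and b=1] assms by simp
  then show ?thesis unfolding QQ_def by simp
qed

lemma QQ_deriv: assumes "e > 0" "-2 < c" "c < 2"
  shows "(QQ e has_real_derivative - gq e c / 4) (at c)"
proof -
  have "((\<lambda>x. integral {-2..x} (gq e)) has_real_derivative gq e c) (at c within {-2..2})"
    using assms by (intro integral_has_real_derivative continuous_on_subset[OF gq_cont]) auto
  then have "((\<lambda>x. integral {-2..x} (gq e)) has_real_derivative gq e c) (at c)"
    using assms at_within_interior[of c "{-2..2::real}"] by simp
  then show ?thesis unfolding QQ_def
    by (auto intro!: derivative_eq_intros)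
qed

lemma QQ_zero: assumes "e > 0" "e < 1" "sqrt (1 - e^2) \<le> c" "c \<le> 1"
  shows "QQ e c = 0"
proof -
  have c2: "-2 \<le> c" using assms real_sqrt_ge_zero[of "1 - e^2"] by (smt (verit) power_le_one)
  have "integral {c..1} (gq e) = integral {c..1} (\<lambda>_. 0::real)"
    using assms by (intro integral_cong gq_zero) auto
  then show ?thesis using QQ_eq[OF assms(1) c2 assms(4)] by simp
qed

lemma QQ_bounds: assumes "e > 0" "-1 \<le> c" "c \<le> 1"
  shows "0 \<le> QQ e c" "QQ e c \<le> (1 - c) / (2*e)"
proof -
  have eq: "QQ e c = integral {c..1} (gq e) / 4" using QQ_eq assms by auto
  have "integral {c..1} (gq e) \<ge> 0"
    using assms by (intro integral_nonneg gq_int gq_nonneg) auto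
  then show "0 \<le> QQ e c" using eq by simp
  have "integral {c..1} (gq e) \<le> integral {c..1} (\<lambda>_. 2/e)"
    using assms by (intro integral_le gq_int gq_le) auto
  also have "\<dots> = (1 - c) * (2/e)" using assms by simp
  finally have "integral {c..1} (gq e) \<le> (1 - c) * (2/e)" .
  then have "QQ e c * 4 \<le> (1 - c) * (2/e)" using eq by simp
  then show "QQ e c \<le> (1 - c) / (2*e)" using assms(1) by (simp add: field_simps)
qed




lemma gq_cos: "gq e (cos (2*t)) = 2 * (sin t)^2 * psi e \<bar>sin (2*t)\<bar>"
proof -
  have "1 - (cos (2*t))^2 = (sin (2*t))^2" by (simp add: sin_squared_eq)
  then have "sqrt (1 - (cos (2*t))^2) = \<bar>sin (2*t)\<bar>" by simp
  moreover have "1 - cos (2*t) = 2 * (sin t)^2" by (simp add: cos_double_sin)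
  ultimately show ?thesis unfolding gq_def by simp
qed

lemma qq_deriv: assumes "e > 0"
  shows "((\<lambda>t. QQ e (cos (2*t))) has_real_derivative ss e t * (sin t)^2) (at t)"
proof -
  have c: "-2 < cos (2*t)" "cos (2*t) < 2" using cos_ge_minus_one[of "2*t"] cos_le_one[of "2*t"] by linarith+
  have "((\<lambda>t. QQ e (cos (2*t))) has_real_derivative (- gq e (cos (2*t)) / 4) * (- sin (2*t) * 2)) (at t)"
  proof -
    have d: "((\<lambda>t. cos (2*t)) has_real_derivative (- sin (2*t) * 2)) (at t)"
      by (auto intro!: derivative_eq_intros)
    show ?thesis using DERIV_chain2[OF QQ_deriv[OF assms c] d] by simp
  qed
  moreover have "(- gq e (cos (2*t)) / 4) * (- sin (2*t) * 2) = ss e t * (sin t)^2"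
    unfolding gq_cos ss_def by (simp add: field_simps)
  ultimately show ?thesis by simp
qed

definition dlt :: "real \<Rightarrow> real" where "dlt e = (1 - sqrt (1 - e^2)) / 2"

lemma dlt_pos: "0 < e \<Longrightarrow> e < 1 \<Longrightarrow> dlt e > 0"
proof -
  assume a: "0 < e" "e < 1"
  have "1 - e^2 < 1" using a by simp
  then have "sqrt (1 - e^2) < 1" by (simp add: real_sqrt_less_iff[of _ 1, simplified])
  then show ?thesis unfolding dlt_def by simp
qed

lemma hh_zero: assumes "0 < e" "e < 1" "(sin t)^2 < dlt e" shows "hh e t = 0"
proof -
  have "cos (2*t) = 1 - 2 * (sin t)^2" by (simp add: cos_double_sin)
  then have "sqrt (1 - e^2) \<le> cos (2*t)" using assms(3) unfolding dlt_def by simp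
  then show ?thesis unfolding hh_def using QQ_zero[OF assms(1,2)] by simp
qed

lemma ev_small: assumes "0 < e" "e < 1" "sin t = 0"
  shows "eventually (\<lambda>x. (sin x)^2 < dlt e) (nhds t)"
proof -
  have "isCont (\<lambda>x. (sin x)^2) t" by (intro continuous_intros)
  then have "((\<lambda>x. (sin x)^2) \<longlongrightarrow> 0) (nhds t)" using assms(3)
    by (metis (no_types, lifting) continuous_within tendsto_nhds_iff zero_power2 isCont_def)
  then show ?thesis using dlt_pos[OF assms(1,2)] order_tendstoD(2) by blast
qed

lemma hh_deriv: assumes "0 < e" "e < 1"
  shows "(hh e has_real_derivative ss e t - 2 * hcot e t) (at t)"
proof (cases "sin t = 0")
  case True
  have ev: "eventually (\<lambda>x. hh e x = 0) (nhds t)"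
    using ev_small[OF assms True] by eventually_elim (use hh_zero assms in auto)
  have s0: "ss e t = 0" using True unfolding ss_def by (simp add: sin_double)
  have h0: "hcot e t = 0" using True unfolding hcot_def by simp
  have "((\<lambda>x. 0::real) has_real_derivative 0) (at t)" by simp
  then show ?thesis using ev s0 h0
    by (subst DERIV_cong_ev[where g="\<lambda>x. 0" and y=t and v=0]) (auto elim: eventually_mono)
next
  case False
  have "((\<lambda>t. QQ e (cos (2*t)) / (sin t)^2) has_real_derivative
     ((ss e t * (sin t)^2) * (sin t)^2 - QQ e (cos (2*t)) * (2 * sin t * cos t)) / ((sin t)^2 * (sin t)^2)) (at t)"
    by (rule DERIV_divide[OF qq_deriv[OF assms(1)]]) (use False in \<open>auto intro!: derivative_eq_intros\<close>)
  moreover have "((ss e t * (sin t)^2) * (sin t)^2 - QQ e (cos (2*t)) * (2 * sin t * cos t)) / ((sin t)^2 * (sin t)^2)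
      = ss e t - 2 * hcot e t"
    using False unfolding hcot_def hh_def by (simp add: field_simps power2_eq_square)
  ultimately show ?thesis unfolding hh_def[abs_def] by simp
qed

lemma hh_cont: "0 < e \<Longrightarrow> e < 1 \<Longrightarrow> isCont (hh e) t"
  using hh_deriv DERIV_isCont by blast

lemma hcot_cont: assumes "0 < e" "e < 1" shows "isCont (hcot e) t"
proof (cases "sin t = 0")
  case True
  have ev: "eventually (\<lambda>x. hcot e x = 0) (nhds t)"
    using ev_small[OF assms True] by eventually_elim (use hh_zero assms in \<open>auto simp: hcot_def\<close>)
  then show ?thesis using isCont_cong[OF ev] by simp
next
  case False
  have "isCont (\<lambda>x. hh e x * cos x / sin x) t"
    using False hh_cont[OF assms] by (intro continuous_intros) auto
  then show ?thesis unfolding hcot_def[abs_def] .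
qed

lemma ss_cont: assumes "0 < e" shows "isCont (ss e) t"
proof -
  have pc: "\<And>x. isCont (psi e) x"
    by (metis continuous_on_eq_continuous_at open_UNIV psi_cont[OF assms] UNIV_I)
  have "isCont (\<lambda>t. psi e (\<bar>sin (2*t)\<bar>)) t" by (rule isCont_o2[OF _ pc]) (intro continuous_intros)
  then show ?thesis unfolding ss_def[abs_def] by (intro continuous_intros)
qed

lemma hcot_sin: "hcot e t * sin t = hh e t * cos t"
  unfolding hcot_def hh_def by auto

lemma ss_sin2: assumes "0 < e" shows "ss e t * sin (2*t) = pp e t"
proof -
  let ?w = "\<bar>sin (2*t)\<bar>"
  have "ss e t * sin (2*t) = ?w^2 * psi e ?w" unfolding ss_def by (simp add: power2_eq_square)
  also have "\<dots> = pp e t"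
  proof (cases "?w \<le> e")
    case True then show ?thesis using psi_zero[OF True] unfolding pp_def by simp
  next
    case False
    then have "?w > 0" using assms by simp
    then show ?thesis using False unfolding psi_def pp_def by (simp add: max_def)
  qed
  finally show ?thesis .
qed

lemma hh_bounds: assumes "0 < e" shows "0 \<le> hh e t" "hh e t \<le> 1 / e"
proof -
  have c: "-1 \<le> cos (2*t)" "cos (2*t) \<le> 1" by auto
  have eq: "1 - cos (2*t) = 2 * (sin t)^2" by (simp add: cos_double_sin)
  show "0 \<le> hh e t" unfolding hh_def using QQ_bounds(1)[OF assms c] by simp
  show "hh e t \<le> 1 / e"
  proof (cases "sin t = 0")
    case True then show ?thesis unfolding hh_def using assms by simp
  next
    case False
    have "QQ e (cos (2*t)) \<le> 2 * (sin t)^2 / (2*e)" using QQ_bounds(2)[OF assms c] eq by simp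
    then show ?thesis unfolding hh_def using False assms by (simp add: field_simps)
  qed
qed

lemma ss_abs_le: assumes "0 < e" "e < 1" shows "\<bar>ss e t\<bar> \<le> 1 - e"
proof -
  let ?w = "\<bar>sin (2*t)\<bar>"
  have "\<bar>ss e t\<bar> = ?w * psi e ?w" unfolding ss_def using psi_nonneg[OF assms(1)] by (simp add: abs_mult)
  also have "\<dots> \<le> 1 - e"
  proof (cases "?w \<le> e")
    case True then show ?thesis using psi_zero[OF True] assms by simp
  next
    case False
    then have w: "?w > 0" "?w \<le> 1" using assms by auto
    have "?w * psi e ?w = ?w * (?w - e) / (?w * ?w)" using False w unfolding psi_def by (simp add: max_def power2_eq_square)
    also have "\<dots> = (?w - e) / ?w" using w by (simp add: field_simps)
    also have "\<dots> = 1 - e / ?w" using w by (simp add: field_simps)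
    also have "\<dots> \<le> 1 - e" using w assms by (simp add: field_simps)
    finally show ?thesis .
  qed
  finally show ?thesis .
qed




definition SS :: "real \<Rightarrow> real \<Rightarrow> real" where
  "SS e t = integral {-1..t} (pp e) - integral {-1..0} (pp e)"
definition GG :: "real \<Rightarrow> real \<Rightarrow> real" where
  "GG e t = SS e t / 2 - hh e t * sin t * cos t"

lemma pp_cont: "continuous_on UNIV (pp e)"
  unfolding pp_def by (intro continuous_intros)

lemma pp_per: "pp e (t + pi) = pp e t"
  unfolding pp_def by (simp add: distrib_left)

lemma SS_deriv: assumes "-1 < t" shows "(SS e has_real_derivative pp e t) (at t)"
proof -
  have "((\<lambda>x. integral {-1..x} (pp e)) has_real_derivative pp e t) (at t within {-1..t+1})"
    using assms by (intro integral_has_real_derivative continuous_on_subset[OF pp_cont]) auto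
  then have "((\<lambda>x. integral {-1..x} (pp e)) has_real_derivative pp e t) (at t)"
    using assms at_within_interior[of t "{-1..t+1::real}"] by simp
  then show ?thesis unfolding SS_def[abs_def] by (auto intro!: derivative_eq_intros)
qed

lemma SS_0: "SS e 0 = 0" by (simp add: SS_def)

lemma GG_deriv: assumes "0 < e" "e < 1" "-1 < t"
  shows "(GG e has_real_derivative hh e t) (at t)"
proof -
  have "((\<lambda>t. SS e t / 2 - hh e t * sin t * cos t) has_real_derivative
     pp e t / 2 - ((ss e t - 2 * hcot e t) * sin t * cos t + hh e t * cos t * cos t + hh e t * sin t * (- sin t))) (at t)"
    by (auto intro!: derivative_eq_intros SS_deriv[OF assms(3)] hh_deriv[OF assms(1,2)] simp: algebra_simps)
  moreover have "pp e t / 2 - ((ss e t - 2 * hcot e t) * sin t * cos t + hh e t * cos t * cos t + hh e t * sin t * (- sin t))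
     = hh e t"
  proof -
    have a: "pp e t = 2 * ss e t * sin t * cos t" using ss_sin2[OF assms(1), of t] by (simp add: sin_double)
    have b: "hcot e t * sin t = hh e t * cos t" by (rule hcot_sin)
    have "pp e t / 2 - ((ss e t - 2 * hcot e t) * sin t * cos t + hh e t * cos t * cos t + hh e t * sin t * (- sin t))
      = 2 * (hcot e t * sin t) * cos t - hh e t * cos t * cos t + hh e t * sin t * sin t"
      unfolding a by (simp add: algebra_simps)
    also have "\<dots> = hh e t" using sin_cos_squared_add[of t] unfolding b power2_eq_square by algebra
    finally show ?thesis .
  qed
  ultimately show ?thesis unfolding GG_def[abs_def] by simp
qed

lemma SS_per: assumes "0 \<le> t" shows "SS e (t + pi) = SS e t + SS e pi"
proof -
  have "\<exists>c. \<forall>x\<in>{0..}. SS e (x + pi) - SS e x = c"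
  proof (rule has_field_derivative_zero_constant)
    fix x :: real assume "x \<in> {0..}"
    then have "0 \<le> x" by simp
    then have x: "-1 < x" "-1 < x + pi" using pi_gt_zero by linarith+
    have "((\<lambda>x. SS e (x + pi) - SS e x) has_real_derivative pp e (x + pi) - pp e x) (at x)"
    proof -
      have d: "((\<lambda>x. x + pi) has_real_derivative 1) (at x)" by (auto intro!: derivative_eq_intros)
      show ?thesis using DERIV_chain2[OF SS_deriv[OF x(2), of e] d]
        by (auto intro!: derivative_eq_intros SS_deriv[OF x(1)])
    qed
    then show "((\<lambda>x. SS e (x + pi) - SS e x) has_real_derivative 0) (at x within {0..})"
      by (simp add: pp_per has_field_derivative_at_within)
  qed auto
  then obtain c where c: "\<And>x. x \<ge> 0 \<Longrightarrow> SS e (x + pi) - SS e x = c" by auto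
  have "c = SS e pi" using c[of 0] SS_0 by simp
  then show ?thesis using c[OF assms] by simp
qed

lemma SS_bounded: "\<exists>B. \<forall>t\<ge>0. \<bar>SS e t - (SS e pi / pi) * t\<bar> \<le> B"
proof -
  define D where "D t = SS e t - (SS e pi / pi) * t" for t
  have Dper: "D (t + pi) = D t" if "t \<ge> 0" for t
    using SS_per[OF that] unfolding D_def by (simp add: field_simps)
  have Dn: "D (r + real n * pi) = D r" if "r \<ge> 0" for r n
  proof (induction n)
    case (Suc n)
    have "D (r + real (Suc n) * pi) = D ((r + real n * pi) + pi)" by (simp add: algebra_simps)
    also have "\<dots> = D (r + real n * pi)" using that by (intro Dper) auto
    finally show ?case using Suc by simp
  qed simp
  have ic: "\<And>x. 0 \<le> x \<Longrightarrow> isCont (SS e) x" using DERIV_isCont[OF SS_deriv] by force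
  have "continuous_on {0..pi} D"
    unfolding D_def using ic
    by (intro continuous_intros continuous_at_imp_continuous_on) auto
  then obtain B where B: "\<And>x. x \<in> {0..pi} \<Longrightarrow> norm (D x) \<le> B"
    using continuous_on_compact_bound[of "{0..pi}" D] by auto
  have "\<bar>D t\<bar> \<le> B" if "t \<ge> 0" for t
  proof -
    define n where "n = nat \<lfloor>t / pi\<rfloor>"
    have fl: "real_of_int \<lfloor>t / pi\<rfloor> \<le> t / pi" "t / pi < real_of_int \<lfloor>t / pi\<rfloor> + 1" by linarith+
    have "\<lfloor>t / pi\<rfloor> \<ge> 0" using that by simp
    then have nn: "real n = real_of_int \<lfloor>t / pi\<rfloor>" unfolding n_def by simp
    define r where "r = t - real n * pi"
    have f1: "real_of_int \<lfloor>t/pi\<rfloor> * pi \<le> t" using fl(1) pi_gt_zero by (simp add: le_divide_eq)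
    have f2: "t < (real_of_int \<lfloor>t/pi\<rfloor> + 1) * pi" using fl(2) pos_divide_less_eq[OF pi_gt_zero] by blast
    have r0: "0 \<le> r" using f1 nn unfolding r_def by simp
    have r1: "r \<le> pi" using f2 nn unfolding r_def by (simp add: algebra_simps)
    have "D t = D r" using Dn[OF r0, of n] unfolding r_def by simp
    then show ?thesis using B[of r] r0 r1 by simp
  qed
  then show ?thesis unfolding D_def by blast
qed

lemma int_abs_sin: "((\<lambda>t. \<bar>sin (2*t)\<bar>) has_integral 2) {0..pi}"
proof -
  have i1: "((\<lambda>t. \<bar>sin (2*t)\<bar>) has_integral ((\<lambda>t. - cos (2*t) / 2) (pi/2) - (\<lambda>t. - cos (2*t) / 2) 0)) {0..pi/2}"
  proof (rule fundamental_theorem_of_calculus)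
    fix x assume x: "x \<in> {0..pi/2}"
    have "sin (2*x) \<ge> 0" using x by (intro sin_ge_zero) auto
    then have "((\<lambda>t. - cos (2*t) / 2) has_real_derivative \<bar>sin (2*x)\<bar>) (at x)"
      by (auto intro!: derivative_eq_intros)
    then show "((\<lambda>t. - cos (2*t) / 2) has_vector_derivative \<bar>sin (2*x)\<bar>) (at x within {0..pi/2})"
      by (simp add: has_real_derivative_iff_has_vector_derivative[symmetric] has_field_derivative_at_within)
  qed simp
  have i2: "((\<lambda>t. \<bar>sin (2*t)\<bar>) has_integral ((\<lambda>t. cos (2*t) / 2) pi - (\<lambda>t. cos (2*t) / 2) (pi/2))) {pi/2..pi}"
  proof (rule fundamental_theorem_of_calculus)
    fix x assume x: "x \<in> {pi/2..pi}"
    have "sin (2*x - pi) \<ge> 0" using x by (intro sin_ge_zero) auto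
    then have "sin (2*x) \<le> 0" by (simp add: sin_diff)
    then have "((\<lambda>t. cos (2*t) / 2) has_real_derivative \<bar>sin (2*x)\<bar>) (at x)"
      by (auto intro!: derivative_eq_intros)
    then show "((\<lambda>t. cos (2*t) / 2) has_vector_derivative \<bar>sin (2*x)\<bar>) (at x within {pi/2..pi})"
      by (simp add: has_real_derivative_iff_has_vector_derivative[symmetric] has_field_derivative_at_within)
  qed simp
  have "((\<lambda>t. \<bar>sin (2*t)\<bar>) has_integral (1 + 1)) {0..pi}"
    by (rule has_integral_combine[of 0 "pi/2" pi]) (use i1 i2 in auto)
  then show ?thesis by simp
qed

lemma SS_pi_ge: assumes "0 < e" shows "SS e pi \<ge> 2 - pi * e"
proof -
  have eq: "SS e pi = integral {0..pi} (pp e)"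
    using Henstock_Kurzweil_Integration.integral_combine[where a="-1" and c=0 and b=pi and f="pp e"]
      integrable_continuous_interval[OF continuous_on_subset[OF pp_cont], of "-1" pi e]
    unfolding SS_def by simp
  have h: "((\<lambda>t. \<bar>sin (2*t)\<bar> - e) has_integral (2 - pi * e)) {0..pi}"
    using has_integral_diff[OF int_abs_sin has_integral_const_real[of e 0 pi]] by (simp add: mult.commute)
  have "integral {0..pi} (\<lambda>t. \<bar>sin (2*t)\<bar> - e) \<le> integral {0..pi} (pp e)"
    by (intro integral_le has_integral_integrable[OF h] integrable_continuous_interval continuous_on_subset[OF pp_cont])
       (auto simp: pp_def)
  then show ?thesis using h eq by (simp add: integral_unique)
qed




lemma alg_u1:
  fixes P G h si co k A :: real assumes "G \<noteq> 0"
  shows "P * (h * k * - A / G) * si + (co * k) * P = k * (P * (co - A * (h * si) / G))"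
  using assms by (simp add: field_simps)

lemma alg_u2:
  fixes P G h s hc si co k A :: real assumes "G \<noteq> 0"
  shows "k * ((P * (h * k * - A / G)) * (co - A * (h * si) / G) + ((- si * k) - (A * (((s - 2 * hc) * k) * si + (co * k) * h) * G - A * (h * si) * (h * k)) / (G * G)) * P)
   = k^2 * P * (- A * h / G * (co - A * h * si / G) - si - A * (((s - 2 * hc) * si + h * co) * G - h * si * h) / G^2)"
  using assms by (simp add: field_simps power2_eq_square)

lemma alg_ode:
  fixes P G h s hc si co k A :: real assumes "G \<noteq> 0" "hc * si = h * co"
  shows "- (k^2 * P * (- A * h / G * (co - A * h * si / G) - si - A * (((s - 2 * hc) * si + h * co) * G - h * si * h) / G^2))
     + (k^2 * A * ((A + 1) * h^2 / G^2 - s / G)) * (P * si) = k^2 * (P * si)"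
proof -
  have "- (k^2 * P * (- A * h / G * (co - A * h * si / G) - si - A * (((s - 2 * hc) * si + h * co) * G - h * si * h) / G^2))
     + (k^2 * A * ((A + 1) * h^2 / G^2 - s / G)) * (P * si) - k^2 * (P * si) = k^2 * P * (A / G^2) * (2 * G * (h * co - hc * si))"
    using assms(1) by (simp add: field_simps power2_eq_square)
  also have "\<dots> = 0" using assms(2) by simp
  finally show ?thesis by simp
qed

context
  fixes e k A m C :: real and N :: nat
  assumes e0: "0 < e" and e1: "e < 1" and k0: "0 < k" and A0: "0 < A"
    and mdef: "m = SS e pi / (2*pi)" and m0: "0 < m"
    and Cb: "\<And>t. 0 \<le> t \<Longrightarrow> \<bar>GG e t - m * t\<bar> \<le> C"
    and Nb: "1 + m * k + C \<le> 2 * pi * real N * m"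
begin

definition tt :: "real \<Rightarrow> real" where "tt x = k * x + 2 * pi * real N"

lemma C0: "0 \<le> C" using Cb[of 0] by simp

lemma tt_pos: assumes "-1 \<le> x" shows "0 < tt x"
proof -
  have "m * k < 2 * pi * real N * m" using Nb C0 by linarith
  then have "k < 2 * pi * real N" using m0 by (simp add: mult.commute)
  moreover have "k * (-1) \<le> k * x" using assms k0 by (intro mult_left_mono) auto
  then have "k * x \<ge> -k" by simp
  ultimately show ?thesis unfolding tt_def by linarith
qed

lemma G_lower: assumes "-1 \<le> x" shows "m * k * (x + 1) + 1 \<le> GG e (tt x)"
proof -
  have "GG e (tt x) \<ge> m * tt x - C" using Cb[of "tt x"] tt_pos[OF assms] by auto
  moreover have "m * tt x = m * k * x + 2 * pi * real N * m" unfolding tt_def by (simp add: algebra_simps)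
  ultimately show ?thesis using Nb by (simp add: algebra_simps)
qed

lemma G_pos: assumes "-1 \<le> x" shows "0 < GG e (tt x)"
proof -
  have "0 \<le> m * k * (x + 1)" using m0 k0 assms by simp
  then show ?thesis using G_lower[OF assms] by linarith
qed

lemma tt_d: "(tt has_real_derivative k) (at x)"
  unfolding tt_def[abs_def] by (auto intro!: derivative_eq_intros)

lemma Gd: assumes "-1 \<le> x" shows "((\<lambda>x. GG e (tt x)) has_real_derivative hh e (tt x) * k) (at x)"
  using DERIV_chain2[OF GG_deriv[OF e0 e1] tt_d] tt_pos[OF assms] by simp

lemma hd: "((\<lambda>x. hh e (tt x)) has_real_derivative (ss e (tt x) - 2 * hcot e (tt x)) * k) (at x)"
  using DERIV_chain2[OF hh_deriv[OF e0 e1] tt_d] by simp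

lemma Pd: assumes "-1 \<le> x"
  shows "((\<lambda>x. GG e (tt x) powr (-A)) has_real_derivative
     GG e (tt x) powr (-A) * (hh e (tt x) * k * (-A) / GG e (tt x))) (at x)"
  using DERIV_powr[OF Gd[OF assms] G_pos[OF assms], of "\<lambda>_. -A" 0] by simp

definition uu :: "real \<Rightarrow> real" where
  "uu x = GG e (tt x) powr (-A) * sin (tt x)"
definition u1 :: "real \<Rightarrow> real" where
  "u1 x = k * (GG e (tt x) powr (-A) * (cos (tt x) - A * (hh e (tt x) * sin (tt x)) / GG e (tt x)))"
definition u2 :: "real \<Rightarrow> real" where
  "u2 x = k^2 * GG e (tt x) powr (-A) *
    (- A * hh e (tt x) / GG e (tt x) * (cos (tt x) - A * hh e (tt x) * sin (tt x) / GG e (tt x))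
     - sin (tt x)
     - A * (((ss e (tt x) - 2 * hcot e (tt x)) * sin (tt x) + hh e (tt x) * cos (tt x)) * GG e (tt x)
            - hh e (tt x) * sin (tt x) * hh e (tt x)) / (GG e (tt x))^2)"
definition VV :: "real \<Rightarrow> real" where
  "VV x = k^2 * A * ((A + 1) * (hh e (tt x))^2 / (GG e (tt x))^2 - ss e (tt x) / GG e (tt x))"

lemma sin_tt_d: "((\<lambda>x. sin (tt x)) has_real_derivative cos (tt x) * k) (at x)"
  using DERIV_chain2[OF DERIV_sin tt_d] by simp
lemma cos_tt_d: "((\<lambda>x. cos (tt x)) has_real_derivative - sin (tt x) * k) (at x)"
  using DERIV_chain2[OF DERIV_cos tt_d] by simp

lemma uu_d: assumes "-1 \<le> x" shows "(uu has_real_derivative u1 x) (at x)"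
proof -
  have Gn: "GG e (tt x) \<noteq> 0" using G_pos[OF assms] by simp
  show ?thesis unfolding uu_def[abs_def] u1_def
    by (rule DERIV_cong[OF DERIV_mult[OF Pd[OF assms] sin_tt_d] alg_u1[OF Gn]])
qed

lemma u1_d: assumes "-1 \<le> x" shows "(u1 has_real_derivative u2 x) (at x)"
proof -
  have Gn: "GG e (tt x) \<noteq> 0" using G_pos[OF assms] by simp
  note d = DERIV_cmult[OF DERIV_mult[OF Pd[OF assms] DERIV_diff[OF cos_tt_d DERIV_divide[OF DERIV_cmult[OF DERIV_mult[OF hd sin_tt_d]] Gd[OF assms] Gn]]], of k]
  show ?thesis unfolding u1_def[abs_def] u2_def
    by (rule DERIV_cong[OF d alg_u2[OF Gn]])
qed

lemma ode: assumes "-1 \<le> x" shows "- u2 x + VV x * uu x = k^2 * uu x"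
proof -
  have Gn: "GG e (tt x) \<noteq> 0" using G_pos[OF assms] by simp
  have b: "hcot e (tt x) * sin (tt x) = hh e (tt x) * cos (tt x)" by (rule hcot_sin)
  show ?thesis unfolding u2_def VV_def uu_def by (rule alg_ode[OF Gn b])
qed

end



lemma absbound_up:
  fixes a1 b H p q s e :: real
  assumes "0 \<le> a1" "0 \<le> b" "0 \<le> H" "H \<le> 1 / e^2" "0 \<le> p" "0 \<le> q" "\<bar>s\<bar> \<le> 1 - e"
  shows "\<bar>a1 * H * p - b * s * q\<bar> \<le> a1 * (1/e^2) * p + b * (1 - e) * q"
proof -
  have "\<bar>a1 * H * p - b * s * q\<bar> \<le> a1 * H * p + b * \<bar>s\<bar> * q"
    using assms by (simp add: abs_mult abs_triangle_ineq4[THEN order_trans])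
  also have "\<dots> \<le> a1 * (1/e^2) * p + b * (1 - e) * q"
    using assms by (intro add_mono mult_right_mono mult_left_mono) auto
  finally show ?thesis .
qed

lemma absbound_low:
  fixes a1 b H p q e :: real
  assumes "0 \<le> a1" "0 \<le> H" "H \<le> 1 / e^2" "0 \<le> p"
  shows "b * (1 - e) * q - a1 * (1/e^2) * p \<le> \<bar>a1 * H * p - b * (1 - e) * q\<bar>"
proof -
  have "a1 * H * p \<le> a1 * (1/e^2) * p" using assms by (intro mult_right_mono mult_left_mono) auto
  then show ?thesis by linarith
qed

context
  fixes e k A m C :: real and N :: nat
  assumes e0: "0 < e" and e1: "e < 1" and k0: "0 < k" and A0: "0 < A"
    and mdef: "m = SS e pi / (2*pi)" and m0: "0 < m"
    and Cb: "\<And>t. 0 \<le> t \<Longrightarrow> \<bar>GG e t - m * t\<bar> \<le> C"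
    and Nb: "1 + m * k + C \<le> 2 * pi * real N * m"
begin

lemmas P4 = e0 e1 k0 A0 mdef m0 Cb Nb

abbreviation "T \<equiv> tt k N"
abbreviation "G x \<equiv> GG e (tt k N x)"

lemma tt_eq: "T x = k * x + 2 * pi * real N" by (rule tt_def[OF P4])

lemma Gpos: "-1 \<le> x \<Longrightarrow> 0 < G x" by (rule G_pos[OF P4])

lemma VV_eq: "VV e k A N = (\<lambda>x. k^2 * A * ((A + 1) * (hh e (T x))^2 / (G x)^2 - ss e (T x) / G x))"
  by (rule ext, rule VV_def[OF P4])

lemma VV_cont: "continuous_on {0..} (VV e k A N)"
proof -
  have "isCont (VV e k A N) x" if x: "0 \<le> x" for x
  proof -
    have x1: "-1 \<le> x" using x by simp
    have c1: "isCont (\<lambda>x. hh e (T x)) x" by (rule DERIV_isCont[OF hd[OF P4]])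
    have c2: "isCont (\<lambda>x. G x) x" by (rule DERIV_isCont[OF Gd[OF P4 x1]])
    have c3: "isCont (\<lambda>x. ss e (T x)) x"
      by (rule isCont_o2[OF DERIV_isCont[OF tt_d[OF P4]] ss_cont[OF e0]])
    show ?thesis unfolding VV_eq using Gpos[OF x1]
      by (intro continuous_intros c1 c2 c3) auto
  qed
  then show ?thesis by (intro continuous_at_imp_continuous_on) auto
qed

definition C2 where "C2 = C + 2 * pi * real N * m"

lemma G_lin: assumes "0 \<le> x" shows "\<bar>G x - m * k * x\<bar> \<le> C2"
proof -
  have "0 \<le> T x" using tt_pos[OF P4, of x] assms by simp
  then have "\<bar>G x - m * T x\<bar> \<le> C" by (rule Cb)
  moreover have "m * T x = m * k * x + 2 * pi * real N * m" unfolding tt_eq by (simp add: algebra_simps)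
  moreover have "0 \<le> 2 * pi * real N * m" using m0 by simp
  ultimately show ?thesis unfolding C2_def by linarith
qed

lemma Gx_lim: "((\<lambda>x. G x / x) \<longlongrightarrow> m * k) at_top"
proof -
  have z: "((\<lambda>x. C2 * inverse x) \<longlongrightarrow> 0) at_top"
    using tendsto_mult[OF tendsto_const[of C2] tendsto_inverse_0_at_top[OF filterlim_ident]] by simp
  have "((\<lambda>x. (G x - m * k * x) / x) \<longlongrightarrow> 0) at_top"
  proof (rule Lim_null_comparison[OF _ z])
    show "\<forall>\<^sub>F x in at_top. norm ((G x - m * k * x) / x) \<le> C2 * inverse x"
      using eventually_gt_at_top[of 0]
    proof eventually_elim
      case (elim x)
      have "norm ((G x - m * k * x) / x) = \<bar>G x - m * k * x\<bar> / x" using elim by simp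
      also have "\<dots> \<le> C2 / x" using G_lin[of x] elim by (intro divide_right_mono) auto
      finally show ?case by (simp add: divide_inverse)
    qed
  qed
  then have "((\<lambda>x. (G x - m * k * x) / x + m * k) \<longlongrightarrow> 0 + m * k) at_top"
    by (intro tendsto_add tendsto_const)
  moreover have "\<forall>\<^sub>F x in at_top. (G x - m * k * x) / x + m * k = G x / x"
    using eventually_gt_at_top[of 0] by eventually_elim (simp add: field_simps)
  ultimately show ?thesis by (simp add: tendsto_cong)
qed

lemma r_lim: "((\<lambda>x. x / G x) \<longlongrightarrow> 1 / (m * k)) at_top"
proof -
  have "((\<lambda>x. inverse (G x / x)) \<longlongrightarrow> inverse (m * k)) at_top"
    using m0 k0 by (intro tendsto_inverse Gx_lim) auto
  then show ?thesis by (simp add: inverse_eq_divide)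
qed

lemma r2_lim: "((\<lambda>x. x / (G x)^2) \<longlongrightarrow> 0) at_top"
proof -
  have "((\<lambda>x. (x / G x) * (x / G x) * inverse x) \<longlongrightarrow> (1 / (m * k)) * (1 / (m * k)) * 0) at_top"
    by (intro tendsto_mult r_lim tendsto_inverse_0_at_top filterlim_ident)
  moreover have "\<forall>\<^sub>F x in at_top. (x / G x) * (x / G x) * inverse x = x / (G x)^2"
    using eventually_gt_at_top[of 0] by eventually_elim (simp add: field_simps power2_eq_square)
  ultimately show ?thesis by (simp add: tendsto_cong)
qed

definition LL where "LL = k * A * (1 - e) / m"

definition al where "al x = k^2 * A * (A + 1) * (1/e^2) * (x / (G x)^2) + k^2 * A * (1 - e) * (x / G x)"
definition be where "be x = k^2 * A * (1 - e) * (x / G x) - k^2 * A * (A + 1) * (1/e^2) * (x / (G x)^2)"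

lemma LL_eq: "k^2 * A * (1 - e) * (1 / (m * k)) = LL"
  unfolding LL_def using k0 m0 by (simp add: field_simps power2_eq_square)

lemma al_lim: "(al \<longlongrightarrow> LL) at_top"
proof -
  have "(al \<longlongrightarrow> k^2 * A * (A + 1) * (1/e^2) * 0 + k^2 * A * (1 - e) * (1 / (m * k))) at_top"
    unfolding al_def[abs_def] by (intro tendsto_intros r_lim r2_lim)
  then show ?thesis using LL_eq by simp
qed

lemma be_lim: "(be \<longlongrightarrow> LL) at_top"
proof -
  have "(be \<longlongrightarrow> k^2 * A * (1 - e) * (1 / (m * k)) - k^2 * A * (A + 1) * (1/e^2) * 0) at_top"
    unfolding be_def[abs_def] by (intro tendsto_intros r_lim r2_lim)
  then show ?thesis using LL_eq by simp
qed

lemma xV_eq: assumes "0 \<le> x"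
  shows "x * VV e k A N x = (k^2 * A * (A + 1)) * (hh e (T x))^2 * (x / (G x)^2) - (k^2 * A) * ss e (T x) * (x / G x)"
proof -
  have "G x \<noteq> 0" using Gpos[of x] assms by simp
  then show ?thesis unfolding VV_eq by (simp add: field_simps power2_eq_square)
qed

lemma h2: "0 \<le> (hh e t)^2" "(hh e t)^2 \<le> 1 / e^2"
proof -
  show "0 \<le> (hh e t)^2" by simp
  have "(hh e t)^2 \<le> (1/e)^2" using hh_bounds[OF e0, of t] by (intro power_mono) auto
  then show "(hh e t)^2 \<le> 1 / e^2" by (simp add: power_divide)
qed

lemma xV_up: assumes "0 \<le> x" shows "\<bar>x * VV e k A N x\<bar> \<le> al x"
proof -
  have G0: "0 < G x" using Gpos[of x] assms by simp
  show ?thesis unfolding xV_eq[OF assms] al_def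
    by (rule absbound_up) (use A0 assms G0 h2 ss_abs_le[OF e0 e1] in auto)
qed

lemma xV_low: assumes "0 \<le> x" "ss e (T x) = 1 - e" shows "be x \<le> \<bar>x * VV e k A N x\<bar>"
proof -
  have G0: "0 < G x" using Gpos[of x] assms by simp
  show ?thesis unfolding xV_eq[OF assms(1)] be_def assms(2)
    by (rule absbound_low) (use A0 assms G0 h2 in auto)
qed

lemma ss_at: "ss e (T ((2 * pi * real n + pi / 4) / k)) = 1 - e"
proof -
  have "T ((2 * pi * real n + pi / 4) / k) = pi / 4 + 2 * pi * real (n + N)"
    unfolding tt_eq using k0 by (simp add: field_simps)
  then have "2 * T ((2 * pi * real n + pi / 4) / k) = pi / 2 + 2 * pi * real (2 * (n + N))"
    by simp
  moreover have "cos (2 * pi * real (2 * (n + N))) = 1"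
    using cos_2npi[of "2 * (n + N)"] by (simp only: mult.commute mult.left_commute mult.assoc)
  moreover have "sin (2 * pi * real (2 * (n + N))) = 0"
    using sin_npi[of "2 * (2 * (n + N))"] by (simp only: mult.commute mult.left_commute of_nat_mult of_nat_numeral)
  ultimately have "sin (2 * T ((2 * pi * real n + pi / 4) / k)) = 1"
    using sin_add[of "pi/2" "2 * pi * real (2 * (n + N))"] by simp
  then show ?thesis unfolding ss_def psi_def using e0 e1 by (simp add: max_def)
qed

lemma Limsup_xV: "Limsup at_top (\<lambda>x. ereal \<bar>x * VV e k A N x\<bar>) = ereal LL"
proof (rule antisym)
  have "Limsup at_top (\<lambda>x. ereal \<bar>x * VV e k A N x\<bar>) \<le> Limsup at_top (\<lambda>x. ereal (al x))"
    by (intro Limsup_mono) (use eventually_ge_at_top[of 0] in \<open>eventually_elim, use xV_up in auto\<close>)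
  also have "\<dots> = ereal LL"
    by (intro lim_imp_Limsup) (auto intro: al_lim simp: tendsto_ereal)
  finally show "Limsup at_top (\<lambda>x. ereal \<bar>x * VV e k A N x\<bar>) \<le> ereal LL" .
next
  show "ereal LL \<le> Limsup at_top (\<lambda>x. ereal \<bar>x * VV e k A N x\<bar>)"
  proof (rule ccontr)
    assume "\<not> ?thesis"
    then have "Limsup at_top (\<lambda>x. ereal \<bar>x * VV e k A N x\<bar>) < ereal LL" by simp
    then obtain y where y1: "Limsup at_top (\<lambda>x. ereal \<bar>x * VV e k A N x\<bar>) < y" and y2: "y < ereal LL"
      using dense by blast
    have ev1: "\<forall>\<^sub>F x in at_top. ereal \<bar>x * VV e k A N x\<bar> < y" using Limsup_lessD[OF y1] .
    have "((\<lambda>x. ereal (be x)) \<longlongrightarrow> ereal LL) at_top" using be_lim by (simp add: tendsto_ereal)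
    then have ev2: "\<forall>\<^sub>F x in at_top. y < ereal (be x)" using y2 order_tendstoD(1) by blast
    have "\<forall>\<^sub>F x in at_top. ereal \<bar>x * VV e k A N x\<bar> < y \<and> y < ereal (be x) \<and> 0 \<le> x"
      using ev1 ev2 eventually_ge_at_top[of 0] by eventually_elim auto
    then obtain X where X: "\<And>x. x \<ge> X \<Longrightarrow> ereal \<bar>x * VV e k A N x\<bar> < y \<and> y < ereal (be x) \<and> 0 \<le> x"
      by (auto simp: eventually_at_top_linorder)
    obtain n :: nat where n: "real n \<ge> X * k" using real_arch_simple by blast
    define x where "x = (2 * pi * real n + pi / 4) / k"
    have "X * k \<le> 2 * pi * real n + pi / 4"
    proof -
      have "1 * real n \<le> (2 * pi) * real n" using pi_gt3 by (intro mult_right_mono) auto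
      then show ?thesis using n pi_gt_zero by linarith
    qed
    then have xX: "x \<ge> X" unfolding x_def using k0 by (simp add: le_divide_eq)
    have x0: "0 \<le> x" using X[OF xX] by simp
    have "be x \<le> \<bar>x * VV e k A N x\<bar>" using xV_low[OF x0] ss_at unfolding x_def by simp
    then show False using X[OF xX] by (meson ereal_less_eq(3) less_trans not_less)
  qed
qed

end



lemma atLeast_leb: "{0::real..} \<in> sets lebesgue"
proof -
  have "closed {0::real..}" by simp
  then show ?thesis by simp
qed

lemma int_pow: assumes "a < -1" shows "(\<lambda>x::real. (x + 1) powr a) integrable_on {0..}"
proof -
  define F where "F y = (y + 1) powr (a + 1) / (a + 1)" for y :: real
  have "((\<lambda>x. (x + 1) powr a) has_integral (0 - F 0)) {0..}"
  proof (rule has_integral_to_inf)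
    show "(\<lambda>x. (x + 1) powr a) integrable_on {0..y}" for y
      by (intro integrable_continuous_interval continuous_intros) auto
    have ieq: "integral {0..y} (\<lambda>x. (x + 1) powr a) = F y - F 0" if "y \<ge> 0" for y
    proof -
      have "((\<lambda>x. (x + 1) powr a) has_integral (F y - F 0)) {0..y}"
        unfolding F_def using assms that
        by (intro fundamental_theorem_of_calculus)
           (auto intro!: derivative_eq_intros simp flip: has_real_derivative_iff_has_vector_derivative)
      then show ?thesis by (rule integral_unique)
    qed
    have ev: "\<forall>\<^sub>F y in at_top. F y - F 0 = integral {0..y} (\<lambda>x. (x + 1) powr a)"
      by (rule eventually_at_top_linorderI[of 0]) (simp add: ieq)
    have "((\<lambda>y. (y + 1) powr (a + 1)) \<longlongrightarrow> 0) at_top"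
    proof -
      have "LIM y at_top. (y::real) + 1 :> at_top"
        using filterlim_tendsto_add_at_top[OF tendsto_const[of 1] filterlim_ident] by (simp add: add.commute)
      then show ?thesis using assms by (intro tendsto_neg_powr) auto
    qed
    then have "((\<lambda>y. F y - F 0) \<longlongrightarrow> 0 / (a + 1) - F 0) at_top"
      unfolding F_def using assms by (intro tendsto_intros) auto
    then show "((\<lambda>y. integral {0..y} (\<lambda>x. (x + 1) powr a)) \<longlongrightarrow> 0 - F 0) at_top"
      using ev by (simp add: tendsto_cong)
  qed (use assms in auto)
  then show ?thesis by blast
qed

context
  fixes e k A m C :: real and N :: nat
  assumes e0: "0 < e" and e1: "e < 1" and k0: "0 < k" and A0: "0 < A"
    and mdef: "m = SS e pi / (2*pi)" and m0: "0 < m"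
    and Cb: "\<And>t. 0 \<le> t \<Longrightarrow> \<bar>GG e t - m * t\<bar> \<le> C"
    and Nb: "1 + m * k + C \<le> 2 * pi * real N * m"
    and Ahalf: "1 / 2 < A"
begin

lemmas P6 = e0 e1 k0 A0 mdef m0 Cb Nb

lemma Gpos6: "-1 \<le> x \<Longrightarrow> 0 < GG e (tt k N x)" by (rule G_pos[OF P6])

lemma uu_eq: "uu e k A N x = GG e (tt k N x) powr (-A) * sin (tt k N x)" by (rule uu_def[OF P6])

lemma u_bound: assumes "0 \<le> x"
  shows "(uu e k A N x)^2 \<le> (m * k) powr (-2 * A) * (x + 1) powr (-2 * A)"
proof -
  let ?G = "GG e (tt k N x)"
  have x1: "-1 \<le> x" using assms by simp
  have Gl: "m * k * (x + 1) + 1 \<le> ?G" by (rule G_lower[OF P6 x1])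
  have mk: "0 < m * k * (x + 1)" using m0 k0 assms by simp
  have Gp: "0 < ?G" using Gl mk by linarith
  have "(uu e k A N x)^2 = (?G powr (-A))^2 * (sin (tt k N x))^2" unfolding uu_eq by (simp add: power_mult_distrib)
  also have "\<dots> \<le> (?G powr (-A))^2 * 1" by (intro mult_left_mono) (auto simp: abs_square_le_1)
  also have "\<dots> = ?G powr (-2 * A)" using Gp by (simp add: power2_eq_square powr_add[symmetric])
  also have "\<dots> \<le> (m * k * (x + 1)) powr (-2 * A)" using Gl mk A0 by (intro powr_mono2') auto
  also have "\<dots> = (m * k) powr (-2 * A) * (x + 1) powr (-2 * A)" using m0 k0 assms by (simp add: powr_mult)
  finally show ?thesis .
qed

lemma uu_cont: "continuous_on {0..} (uu e k A N)"
  by (intro continuous_at_imp_continuous_on ballI DERIV_isCont[OF uu_d[OF P6]]) auto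

lemma u_int: "(\<lambda>x. (uu e k A N x)^2) integrable_on {0..}"
proof (rule measurable_bounded_by_integrable_imp_integrable_real)
  show "(\<lambda>x. (uu e k A N x)^2) \<in> borel_measurable (lebesgue_on {0..})"
    by (intro continuous_imp_measurable_on_sets_lebesgue continuous_intros uu_cont atLeast_leb)
  show "(\<lambda>x. (m * k) powr (-2 * A) * (x + 1) powr (-2 * A)) integrable_on {0..}"
    using Ahalf by (intro integrable_on_mult_right int_pow) auto
  show "\<bar>(uu e k A N x)^2\<bar> \<le> (m * k) powr (-2 * A) * (x + 1) powr (-2 * A)" if "x \<in> {0..}" for x
    using u_bound[of x] that by simp
qed (rule atLeast_leb)

lemma nonzero: "\<exists>x>0. uu e k A N x \<noteq> 0"
proof -
  have kk: "0 < pi / (2 * k)" using k0 by simp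
  have t: "tt k N (pi / (2 * k)) = pi / 2 + 2 * pi * real N" using k0 by (simp add: tt_def[OF P6])
  have "cos (2 * pi * real N) = cos (2 * real N * pi)" by (simp add: mult_ac)
  then have c: "cos (2 * pi * real N) = 1" by simp
  have "sin (2 * pi * real N) = sin (real (2 * N) * pi)" by (simp add: mult_ac)
  then have s: "sin (2 * pi * real N) = 0" by simp
  have s1: "sin (tt k N (pi / (2 * k))) = 1" unfolding t sin_add using c s by simp
  have "-1 \<le> pi / (2 * k)" using kk by linarith
  then have "0 < GG e (tt k N (pi / (2 * k)))" by (rule Gpos6)
  then have "uu e k A N (pi / (2 * k)) \<noteq> 0" unfolding uu_eq s1 by simp
  then show ?thesis using kk by blast
qed

lemma eig: "half_line_eigenvalue (VV e k A N) 0 (k^2)"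
  unfolding half_line_eigenvalue_def
proof (rule exI[where x="uu e k A N"], rule exI[where x="u1 e k A N"], rule exI[where x="u2 e k A N"], intro conjI)
  show "\<forall>x\<ge>0. (uu e k A N has_real_derivative u1 e k A N x) (at x within {0..})"
    using uu_d[OF P6] by (auto intro: has_field_derivative_at_within)
  show "\<forall>x\<ge>0. (u1 e k A N has_real_derivative u2 e k A N x) (at x within {0..})"
    using u1_d[OF P6] by (auto intro: has_field_derivative_at_within)
  show "\<forall>x\<ge>0. - u2 e k A N x + VV e k A N x * uu e k A N x = k^2 * uu e k A N x"
    using ode[OF P6] by auto
  show "(\<lambda>x. (uu e k A N x)^2) integrable_on {0..}" by (rule u_int)
  have "sin (2 * pi * real N) = sin (real (2 * N) * pi)" by (simp add: mult_ac)
  then have "sin (2 * pi * real N) = 0" by simp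
  then show "cos 0 * uu e k A N 0 - sin 0 * u1 e k A N 0 = 0"
    by (simp add: uu_eq tt_def[OF P6])
  show "\<exists>x>0. uu e k A N x \<noteq> 0" by (rule nonzero)
qed

end

theorem theorem1p2:
  fixes a E :: real
  assumes "a > 0" and "0 < E" and "E < 4 * a\<^sup>2 / pi\<^sup>2"
  shows "\<exists>V :: real \<Rightarrow> real. continuous_on {0..} V \<and>
           Limsup at_top (\<lambda>x. ereal \<bar>x * V x\<bar>) = ereal a \<and>
           (\<exists>theta. half_line_eigenvalue V theta E)"
proof -
  define k where "k = sqrt E"
  have k0: "0 < k" unfolding k_def using assms(2) by simp
  have kE: "k^2 = E" unfolding k_def using assms(2) by simp
  have "sqrt E < sqrt ((2 * a / pi)^2)"
    using assms(3) by (intro real_sqrt_less_mono) (simp add: power_divide power_mult_distrib)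
  then have k2a: "k < 2 * a / pi" unfolding k_def using assms(1) by simp
  then have kl: "k / (2 * a) < 1 / pi" using assms(1) pi_gt_zero by (simp add: field_simps)
  define e where "e = 1 / pi - k / (2 * a)"
  have e0: "0 < e" unfolding e_def using kl by simp
  have "1 / pi < 1" using pi_gt3 by simp
  moreover have "0 < k / (2 * a)" using k0 assms(1) by simp
  ultimately have e1: "e < 1" unfolding e_def by linarith
  define m where "m = SS e pi / (2 * pi)"
  have "m \<ge> (2 - pi * e) / (2 * pi)" unfolding m_def using SS_pi_ge[OF e0] pi_gt_zero
    by (intro divide_right_mono) auto
  also have "(2 - pi * e) / (2 * pi) = 1 / pi - e / 2" using pi_gt_zero by (simp add: field_simps)
  finally have mge: "m \<ge> 1 / pi - e / 2" .
  have aux: "\<And>x y m::real. y - (y - x) / 2 \<le> m \<Longrightarrow> x < y \<Longrightarrow> x < m" by (simp add: field_simps)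
  have mk: "m > k / (2 * a)" using aux[OF mge[unfolded e_def] kl] .
  have "0 < k / (2 * a)" using k0 assms(1) by simp
  then have m0: "0 < m" using mk by linarith
  define A where "A = a * m / (k * (1 - e))"
  have am: "a * m > k / 2" using mk assms(1) by (simp add: field_simps)
  have "k * (1 - e) / 2 \<le> k / 2" using k0 e0 by (simp add: field_simps)
  then have amk: "k * (1 - e) / 2 < a * m" using am by linarith
  have ke: "0 < k * (1 - e)" using k0 e1 by simp
  have Ahalf: "1 / 2 < A" unfolding A_def using amk ke by (simp add: field_simps)
  have A0: "0 < A" using Ahalf by simp
  obtain B where B: "\<And>t. t \<ge> 0 \<Longrightarrow> \<bar>SS e t - (SS e pi / pi) * t\<bar> \<le> B"
    using SS_bounded[of e] by blast
  define C where "C = B / 2 + 1 / e"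
  have Cb: "\<bar>GG e t - m * t\<bar> \<le> C" if t: "0 \<le> t" for t
  proof -
    have "GG e t - m * t = (SS e t - (SS e pi / pi) * t) / 2 - hh e t * (sin t * cos t)"
      unfolding GG_def m_def using pi_gt_zero by (simp add: field_simps)
    moreover have "\<bar>hh e t * (sin t * cos t)\<bar> \<le> 1 / e"
    proof -
      have "\<bar>sin t * cos t\<bar> \<le> 1" using abs_sin_le_one[of t] abs_cos_le_one[of t]
        by (simp add: abs_mult mult_le_one)
      then have "hh e t * \<bar>sin t * cos t\<bar> \<le> hh e t * 1"
        using hh_bounds[OF e0, of t] by (intro mult_left_mono) auto
      then have "\<bar>hh e t * (sin t * cos t)\<bar> \<le> hh e t * 1"
        using hh_bounds[OF e0, of t] by (simp add: abs_mult)
      then show ?thesis using hh_bounds[OF e0, of t] by simp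
    qed
    moreover have aux2: "\<And>X Y B c::real. \<bar>X\<bar> \<le> B \<Longrightarrow> \<bar>Y\<bar> \<le> c \<Longrightarrow> \<bar>X / 2 - Y\<bar> \<le> B / 2 + c"
      by (simp add: abs_le_iff field_simps)
    ultimately show ?thesis using B[OF t] unfolding C_def by metis
  qed
  have C0: "0 \<le> C" using Cb[of 0] by simp
  define N where "N = nat \<lceil>(1 + m * k + C) / (2 * pi * m)\<rceil>"
  have "(1 + m * k + C) / (2 * pi * m) \<le> real N" unfolding N_def by linarith
  then have Nb: "1 + m * k + C \<le> 2 * pi * real N * m"
    using m0 pi_gt_zero by (simp add: divide_le_eq mult_ac)
  note P = e0 e1 k0 A0 m_def m0 Cb Nb
  have LLa: "k * A * (1 - e) / m = a" unfolding A_def using ke m0 k0 e1 by (simp add: field_simps)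
  show ?thesis
  proof (intro exI conjI)
    show "continuous_on {0..} (VV e k A N)" by (rule VV_cont[OF P])
    have L1: "Limsup at_top (\<lambda>x. ereal \<bar>x * VV e k A N x\<bar>) = ereal (LL e k A m)"
      by (rule Limsup_xV) (rule e0 e1 k0 A0 m_def m0 Nb Cb | assumption)+
    have L2: "LL e k A m = k * A * (1 - e) / m"
      by (rule LL_def) (rule e0 e1 k0 A0 m_def m0 Nb Cb | assumption)+
    show "Limsup at_top (\<lambda>x. ereal \<bar>x * VV e k A N x\<bar>) = ereal a"
      using L1 unfolding L2 LLa .
    show "half_line_eigenvalue (VV e k A N) 0 E"
      using eig[OF P Ahalf] unfolding kE .
  qed
qed

end
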